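(* For every $m \in \mathbb{N}$, the $m$-uniform hypergraph $\mathcal{H}_m = (V, \mathcal{E}_s \cup \mathcal{E}_p)$ defined below admits a realization with bottomless rectangles and horizontal strips: there is an injective map $\pi\colon V \to \mathbb{R}^2$ such that for every hyperedge $E$ of $\mathcal{H}_m$ there is a range $R \in \mathcal{R}_{\rm BL} \cup \mathcal{R}_{\rm HS}$ with $\pi(V) \cap R = \pi(E)$.
   Context: Construction of $\mathcal{H}_m$: first a rooted forest $F_m$ with $m^m$ trees is built, whose vertices are partitioned into "stages"; each stage $S$ carries a total order $<_S$, and all vertices of a stage have the same distance $j$ (the level of $S$) to the root of their tree; a stage on level $j \in \{0,\dots,m-1\}$ has $m^{m-j}$ vertices. Start with $m^m$ roots, which form the unique stage on level $0$, ordered in an arbitrary fixed way. Then, for every already defined stage $S$ on level $j < m-1$ and every subset $S' \subseteq S$ with $|S'| = m^{m-j-1}$, add a new stage $T(S')$ on level $j+1$ consisting of $m^{m-j-1}$ new vertices such that every vertex of $S'$ gets exactly one child from $T(S')$, and order $T(S')$ by $<_{T(S')}$ as their parents are ordered by $<_S$. $\mathcal{H}_m$ has vertex set $V = V(F_m)$; its hyperedges are the stage-hyperedges $\mathcal{E}_s$ (for every stage $S$, each set of $m$ consecutive vertices in $<_S$) and the path-hyperedges $\mathcal{E}_p$ (the vertex set of every root-to-leaf path in $F_m$). Bottomless rectangles: $\mathcal{R}_{\rm BL} = \{\{(x,y) : a_1 \leq x \leq a_2,\ y \leq b\} : a_1,a_2,b \in \mathbb{R}\}$; horizontal strips: $\mathcal{R}_{\rm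 HS} = \{\{(x,y) : b_1 \leq y \leq b_2\} : b_1,b_2 \in \mathbb{R}\}$. *)

theory Defs
  imports Main "HOL-Analysis.Analysis"
begin

text \<open>A stage on level j is encoded by the chain
  of subsets of roots chosen so far, newest first: [R_j, ..., R_1], where
  R_{i+1} is the set of roots (= indices 0..<m^m) below the chosen subset S'
  of the stage on level i.  Every vertex of a stage is identified by (chain, r)
  where r is the index of its root ancestor; its parent is (tail chain, r).
  The order of a stage is the order of the root indices (the roots are ordered
  by their index; children are ordered as their parents).\<close>

type_synonym hvertex = "nat set list \<times> nat"

fun stage_set :: "nat \<Rightarrow> nat set list \<Rightarrow> nat set" where
  "stage_set m [] = {..<m ^ m}"
| "stage_set m (R # cs) = R"

fun chain_ok :: "nat \<Rightarrow> nat set list \<Rightarrow> bool" where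
  "chain_ok m [] = True"
| "chain_ok m (R # cs) \<longleftrightarrow> chain_ok m cs \<and> length cs + 1 < m
      \<and> R \<subseteq> stage_set m cs \<and> card R = m ^ (m - (length cs + 1))"

definition H_vertices :: "nat \<Rightarrow> hvertex set" where
  "H_vertices m = {(cs, r). chain_ok m cs \<and> r \<in> stage_set m cs}"

definition forest_parent :: "hvertex \<Rightarrow> hvertex" where
  "forest_parent v = (tl (fst v), snd v)"

definition is_leaf :: "nat \<Rightarrow> hvertex \<Rightarrow> bool" where
  "is_leaf m v \<longleftrightarrow> v \<in> H_vertices m \<and>
     \<not> (\<exists>w \<in> H_vertices m. fst w \<noteq> [] \<and> forest_parent w = v)"

definition stage_edges :: "nat \<Rightarrow> hvertex set set" where
  "stage_edges m = {(\<lambda>r. (cs, r)) ` set (take m (drop i (sorted_list_of_set (stage_set m cs))))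
      | cs i. chain_ok m cs \<and> i + m \<le> card (stage_set m cs)}"

definition path_edges :: "nat \<Rightarrow> hvertex set set" where
  "path_edges m = {{(drop k cs, r) | k. k \<le> length cs} | cs r. is_leaf m (cs, r)}"

definition H_edges :: "nat \<Rightarrow> hvertex set set" where
  "H_edges m = stage_edges m \<union> path_edges m"

definition bottomless_rects :: "(real \<times> real) set set" where
  "bottomless_rects = {{(x, y). a1 \<le> x \<and> x \<le> a2 \<and> y \<le> b} | a1 a2 b. True}"

definition horizontal_strips :: "(real \<times> real) set set" where
  "horizontal_strips = {{(x, y). b1 \<le> y \<and> y \<le> b2} | b1 b2. True}"

end

theory Submission
  imports Defs
begin

definition WO :: "nat set rel" where "WO = (SOME r. Well_order r \<and> Field r = UNIV)"
definition Rs :: "nat set rel" where "Rs = WO - Id"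

lemma WO_props: "Well_order WO \<and> Field WO = UNIV"
  unfolding WO_def by (rule someI_ex, rule well_ordering)

lemma Rs_trans: "trans Rs"
  using WO_props unfolding Rs_def
  by (intro trans_diff_Id) (auto simp: well_order_on_def linear_order_on_def partial_order_on_def preorder_on_def)

lemma Rs_irrefl: "(a, a) \<notin> Rs" unfolding Rs_def by auto

lemma Rs_total: "(a,b) \<in> Rs \<or> a = b \<or> (b,a) \<in> Rs"
proof -
  have "total_on (Field WO) WO" using WO_props
    by (auto simp: well_order_on_def linear_order_on_def)
  then show ?thesis using WO_props unfolding Rs_def total_on_def by auto
qed

lemma Rs_asym: "(a,b) \<in> Rs \<Longrightarrow> (b,a) \<notin> Rs"
  using Rs_trans Rs_irrefl by (meson transD)

definition ltx :: "nat set list \<Rightarrow> nat set list \<Rightarrow> bool" where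
  "ltx c d \<longleftrightarrow> (rev c, rev d) \<in> lexord Rs"
definition lty :: "nat set list \<Rightarrow> nat set list \<Rightarrow> bool" where
  "lty c d \<longleftrightarrow> (rev c, rev d) \<in> lexord (Rs\<inverse>)"

lemma ltx_trans: "ltx a b \<Longrightarrow> ltx b c \<Longrightarrow> ltx a c"
  unfolding ltx_def using lexord_trans Rs_trans by blast
lemma lty_trans: "lty a b \<Longrightarrow> lty b c \<Longrightarrow> lty a c"
  unfolding lty_def using lexord_trans Rs_trans trans_on_converse by blast
lemma ltx_irrefl: "\<not> ltx a a"
  unfolding ltx_def using lexord_irreflexive Rs_irrefl by blast
lemma lty_irrefl: "\<not> lty a a"
  unfolding lty_def using lexord_irreflexive[of "Rs\<inverse>"] Rs_irrefl by blast
lemma ltx_total: "ltx a b \<or> a = b \<or> ltx b a"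
  unfolding ltx_def using lexord_linear[of Rs] Rs_total by (metis rev_rev_ident)
lemma lty_total: "lty a b \<or> a = b \<or> lty b a"
  unfolding lty_def using lexord_linear[of "Rs\<inverse>"] Rs_total by (metis converse_iff rev_rev_ident)

lemma suffix_lt:
  assumes "k \<le> length L"
  shows "(drop k L = L \<or> ltx (drop k L) L) \<and> (drop k L = L \<or> lty (drop k L) L)"
proof (cases "k = 0")
  case True then show ?thesis by simp
next
  case False
  have e: "rev L = rev (drop k L) @ rev (take k L)"
    by (metis append_take_drop_id rev_append)
  have "rev (take k L) \<noteq> []" using False assms by (cases L) auto
  then obtain a v where "rev (take k L) = a # v" by (cases "rev (take k L)") auto
  with e have "rev L = rev (drop k L) @ a # v" by simp
  then show ?thesis unfolding ltx_def lty_def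
    by (simp add: lexord_append_rightI)
qed

lemma first_diff_unique:
  assumes "i < length x" "i < length y" "take i x = take i y" "x!i \<noteq> y!i"
      "j < length x" "j < length y" "take j x = take j y" "x!j \<noteq> y!j"
  shows "i = j"
proof (rule ccontr)
  assume "i \<noteq> j"
  then have "i < j \<or> j < i" by auto
  then show False
  proof
    assume "i < j"
    then have "take j x ! i = x ! i" "take j y ! i = y ! i" by auto
    with assms show False by metis
  next
    assume "j < i"
    then have "take i x ! j = x ! j" "take i y ! j = y ! j" by auto
    with assms show False by metis
  qed
qed

lemma both_le_suffix:
  assumes "c = L \<or> ltx c L" "c = L \<or> lty c L"
  shows "\<exists>k \<le> length L. c = drop k L"
proof (cases "c = L")
  case True then show ?thesis by (intro exI[of _ 0]) auto
next
  case False
  let ?x = "rev c" and ?y = "rev L"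
  have X: "(?x, ?y) \<in> lexord Rs" and Y: "(?x, ?y) \<in> lexord (Rs\<inverse>)"
    using assms False ltx_def lty_def by auto
  show ?thesis
  proof (cases "length ?x < length ?y \<and> take (length ?x) ?y = ?x")
    case True
    then have "rev c = rev (drop (length L - length c) L)"
      by (simp add: take_rev)
    then have "c = drop (length L - length c) L" by simp
    then show ?thesis by (intro exI[of _ "length L - length c"]) auto
  next
    case nP: False
    from X nP obtain i where i: "i < min (length ?x) (length ?y)" "take i ?x = take i ?y" "(?x!i, ?y!i) \<in> Rs"
      unfolding lexord_take_index_conv by blast
    from Y nP obtain j where j: "j < min (length ?x) (length ?y)" "take j ?x = take j ?y" "(?x!j, ?y!j) \<in> Rs\<inverse>"
      unfolding lexord_take_index_conv by blast
    have "?x!i \<noteq> ?y!i" "?x!j \<noteq> ?y!j" using i(3) j(3) Rs_irrefl by auto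
    then have "i = j" using first_diff_unique[of i ?x ?y j] i j by auto
    then show ?thesis using i(3) j(3) Rs_asym by auto
  qed
qed


lemma chain_drop: "chain_ok m cs \<Longrightarrow> chain_ok m (drop k cs)"
proof (induction cs arbitrary: k)
  case Nil then show ?case by simp
next
  case (Cons R cs) then show ?case by (cases k) auto
qed

lemma stage_drop: "chain_ok m cs \<Longrightarrow> stage_set m cs \<subseteq> stage_set m (drop k cs)"
proof (induction cs arbitrary: k)
  case Nil then show ?case by simp
next
  case (Cons R cs)
  show ?case
  proof (cases k)
    case 0 then show ?thesis by simp
  next
    case (Suc k')
    then show ?thesis using Cons.IH[of k'] Cons.prems by auto
  qed
qed

lemma stage_bound: "chain_ok m cs \<Longrightarrow> stage_set m cs \<subseteq> {..<m^m}"
  by (induction cs) auto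

lemma chain_bound: "chain_ok m cs \<Longrightarrow> set cs \<subseteq> Pow {..<m^m} \<and> length cs \<le> m"
proof (induction cs)
  case Nil then show ?case by simp
next
  case (Cons R cs) then show ?case using stage_bound[of m cs] by auto
qed

lemma finite_chains: "finite {cs. chain_ok m cs}"
proof -
  have "{cs. chain_ok m cs} \<subseteq> {xs. set xs \<subseteq> Pow {..<m^m} \<and> length xs \<le> m}"
    using chain_bound by blast
  then show ?thesis using finite_lists_length_le[of "Pow {..<m^m}" m] finite_subset by blast
qed

definition rank :: "('a \<Rightarrow> 'a \<Rightarrow> bool) \<Rightarrow> 'a set \<Rightarrow> 'a \<Rightarrow> nat" where
  "rank lt C c = card {x \<in> C. lt x c}"

lemma rank_le_iff:
  assumes fin: "finite C"
    and tr: "\<And>a b c. lt a b \<Longrightarrow> lt b c \<Longrightarrow> lt a c"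
    and irr: "\<And>a. \<not> lt a a"
    and tot: "\<And>a b. lt a b \<or> a = b \<or> lt b a"
    and c: "c \<in> C" and d: "d \<in> C"
  shows "rank lt C c \<le> rank lt C d \<longleftrightarrow> (c = d \<or> lt c d)"
proof
  assume le: "rank lt C c \<le> rank lt C d"
  show "c = d \<or> lt c d"
  proof (rule ccontr)
    assume "\<not> (c = d \<or> lt c d)"
    then have "lt d c" using tot by blast
    then have "{x \<in> C. lt x d} \<subset> {x \<in> C. lt x c}"
      using tr irr d by blast
    then have "rank lt C d < rank lt C c" unfolding rank_def
      using fin by (intro psubset_card_mono) auto
    with le show False by simp
  qed
next
  assume "c = d \<or> lt c d"
  then show "rank lt C c \<le> rank lt C d"
  proof
    assume "lt c d"
    then have "{x \<in> C. lt x c} \<subseteq> {x \<in> C. lt x d}" using tr by blast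
    then show ?thesis unfolding rank_def using fin by (intro card_mono) auto
  qed simp
qed

lemma rank_less:
  assumes "finite C" "c \<in> C" "\<And>a. \<not> lt a a"
  shows "rank lt C c < card C"
  unfolding rank_def using assms by (intro psubset_card_mono) auto

lemma nat_block_le:
  fixes q q' a b N :: nat
  assumes "b < N" "q * N + a \<le> q' * N + b"
  shows "q \<le> q'"
proof (rule ccontr)
  assume "\<not> q \<le> q'"
  then have "Suc q' \<le> q" by simp
  then have "Suc q' * N \<le> q * N" by (rule mult_le_mono1)
  then show False using assms by simp
qed


declare of_nat_add[simp del] of_nat_mult[simp del]

theorem theorem10:
  fixes m :: nat
  assumes "m \<ge> 1"
  shows "\<exists>\<pi> :: hvertex \<Rightarrow> real \<times> real. inj_on \<pi> (H_vertices m) \<and>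
           (\<forall>E \<in> H_edges m. \<exists>R \<in> bottomless_rects \<union> horizontal_strips.
               \<pi> ` H_vertices m \<inter> R = \<pi> ` E)"
proof -
  define C where "C = {cs. chain_ok m cs}"
  define N where "N = m ^ m"
  define X where "X = card C + 1"
  define rx where "rx = rank ltx C"
  define ry where "ry = rank lty C"
  define \<pi> where "\<pi> = (\<lambda>v::hvertex. (real (snd v * X + rx (fst v)), real (ry (fst v) * N + snd v)))"
  have finC: "finite C" unfolding C_def by (rule finite_chains)
  have rxle: "\<And>c d. c \<in> C \<Longrightarrow> d \<in> C \<Longrightarrow> rx c \<le> rx d \<longleftrightarrow> (c = d \<or> ltx c d)"
    unfolding rx_def by (rule rank_le_iff[OF finC ltx_trans ltx_irrefl ltx_total])
  have ryle: "\<And>c d. c \<in> C \<Longrightarrow> d \<in> C \<Longrightarrow> ry c \<le> ry d \<longleftrightarrow> (c = d \<or> lty c d)"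
    unfolding ry_def by (rule rank_le_iff[OF finC lty_trans lty_irrefl lty_total])
  have ryinj: "\<And>c d. c \<in> C \<Longrightarrow> d \<in> C \<Longrightarrow> ry c = ry d \<Longrightarrow> c = d"
  proof -
    fix c d assume cd: "c \<in> C" "d \<in> C" "ry c = ry d"
    then have "c = d \<or> lty c d" "d = c \<or> lty d c" using ryle[OF cd(1,2)] ryle[OF cd(2,1)] cd(3) by simp_all
    then show "c = d" using lty_trans lty_irrefl by blast
  qed
  have rxlt: "\<And>c. c \<in> C \<Longrightarrow> rx c < X"
  proof -
    fix c assume "c \<in> C"
    then have "rank ltx C c < card C" using rank_less[OF finC] ltx_irrefl by blast
    then show "rx c < X" unfolding rx_def X_def by simp
  qed
  have vert: "\<And>cs r. (cs, r) \<in> H_vertices m \<longleftrightarrow> cs \<in> C \<and> r \<in> stage_set m cs"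
    unfolding H_vertices_def C_def by auto
  have rN: "\<And>cs r. (cs, r) \<in> H_vertices m \<Longrightarrow> r < N"
    using stage_bound unfolding vert N_def C_def by blast
  have inj: "inj_on \<pi> (H_vertices m)"
  proof (rule inj_onI)
    fix v w assume v: "v \<in> H_vertices m" and w: "w \<in> H_vertices m" and e: "\<pi> v = \<pi> w"
    obtain c r where vv: "v = (c, r)" by (cases v)
    obtain c' r' where ww: "w = (c', r')" by (cases w)
    have y: "ry c * N + r = ry c' * N + r'" using e unfolding \<pi>_def vv ww by simp
    have "r < N" "r' < N" using rN v w vv ww by auto
    then have "ry c \<le> ry c'" "ry c' \<le> ry c" using y nat_block_le[of r' N "ry c" r "ry c'"] nat_block_le[of r N "ry c'" r' "ry c"] by auto
    then have "ry c = ry c'" by simp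
    moreover then have "r = r'" using y by simp
    moreover have "c \<in> C" "c' \<in> C" using v w vv ww vert by auto
    ultimately show "v = w" using ryinj vv ww by auto
  qed
  have edges: "\<exists>R \<in> bottomless_rects \<union> horizontal_strips. \<pi> ` H_vertices m \<inter> R = \<pi> ` E"
    if E: "E \<in> H_edges m" for E
  proof -
    from E consider "E \<in> stage_edges m" | "E \<in> path_edges m" unfolding H_edges_def by blast
    then show ?thesis
    proof cases
      case 1
      then obtain cs i where E: "E = (\<lambda>r. (cs, r)) ` set (take m (drop i (sorted_list_of_set (stage_set m cs))))"
        and cok: "chain_ok m cs" and im: "i + m \<le> card (stage_set m cs)"
        unfolding stage_edges_def by blast
      define S where "S = stage_set m cs"
      define xs where "xs = sorted_list_of_set S"
      have SN: "S \<subseteq> {..<N}" using stage_bound[OF cok] unfolding S_def N_def .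
      then have finS: "finite S" using finite_subset by blast
      have lxs: "length xs = card S" unfolding xs_def by simp
      have sxs: "set xs = S" unfolding xs_def using finS by simp
      have sorted: "sorted xs" unfolding xs_def by simp
      have ssorted: "sorted_wrt (<) xs" unfolding xs_def using strict_sorted_list_of_set by blast
      have csC: "cs \<in> C" using cok C_def by simp
      have im': "i + m \<le> length xs" using im lxs S_def by simp
      define b1 where "b1 = ry cs * N + xs ! i"
      define b2 where "b2 = ry cs * N + xs ! (i + m - 1)"
      define R where "R = {(x::real, y::real). real b1 \<le> y \<and> y \<le> real b2}"
      have Rin: "R \<in> horizontal_strips" unfolding R_def horizontal_strips_def by blast
      have memE: "r \<in> set (take m (drop i xs)) \<longleftrightarrow> (\<exists>j. i \<le> j \<and> j < i + m \<and> r = xs ! j)" for r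
      proof
        assume "r \<in> set (take m (drop i xs))"
        then obtain j where "j < length (take m (drop i xs))" "take m (drop i xs) ! j = r"
          by (auto simp: in_set_conv_nth)
        then show "\<exists>j. i \<le> j \<and> j < i + m \<and> r = xs ! j" using im'
          by (intro exI[of _ "i + j"]) auto
      next
        assume "\<exists>j. i \<le> j \<and> j < i + m \<and> r = xs ! j"
        then obtain j where j: "i \<le> j" "j < i + m" "r = xs ! j" by blast
        then have "take m (drop i xs) ! (j - i) = r" "j - i < length (take m (drop i xs))"
          using im' by auto
        then show "r \<in> set (take m (drop i xs))" by (metis nth_mem)
      qed
      have "\<pi> ` H_vertices m \<inter> R = \<pi> ` E"
      proof
        show "\<pi> ` H_vertices m \<inter> R \<subseteq> \<pi> ` E"
        proof
          fix p assume "p \<in> \<pi> ` H_vertices m \<inter> R"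
          then obtain c r where cr: "(c, r) \<in> H_vertices m" "p = \<pi> (c, r)" "\<pi> (c, r) \<in> R" by auto
          have y1: "ry cs * N + xs ! i \<le> ry c * N + r" and y2: "ry c * N + r \<le> ry cs * N + xs ! (i + m - 1)"
            using cr(3) unfolding R_def \<pi>_def b1_def b2_def by auto
          have "i + m - 1 < length xs" using im' assms by linarith
          then have "xs ! (i + m - 1) \<in> S" using sxs nth_mem by blast
          then have "xs ! (i + m - 1) < N" using SN by auto
          have "r < N" using rN cr(1) .
          have "ry cs \<le> ry c" using nat_block_le[OF \<open>r < N\<close> y1] .
          moreover have "ry c \<le> ry cs" using nat_block_le[OF \<open>xs ! (i + m - 1) < N\<close> y2] .
          ultimately have "ry c = ry cs" by simp
          moreover have cC: "c \<in> C" using cr(1) vert by auto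
          ultimately have cc: "c = cs" using ryinj csC by blast
          then have y1': "xs ! i \<le> r" and y2': "r \<le> xs ! (i + m - 1)" using y1 y2 by auto
          have "r \<in> S" using cr(1) cc vert S_def by auto
          then obtain j where j: "j < length xs" "r = xs ! j" using sxs by (metis in_set_conv_nth)
          have "i \<le> j"
          proof (rule ccontr)
            assume "\<not> i \<le> j"
            then have "xs ! j < xs ! i" using sorted_wrt_nth_less[OF ssorted, of j i] im' assms by simp
            then show False using y1' j by simp
          qed
          moreover have "j < i + m"
          proof (rule ccontr)
            assume "\<not> j < i + m"
            then have "xs ! (i + m - 1) < xs ! j" using sorted_wrt_nth_less[OF ssorted, of "i + m - 1" j] j assms by simp
            then show False using y2' j by simp
          qed
          ultimately have "r \<in> set (take m (drop i xs))" using memE j by blast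
          then have "(c, r) \<in> E" unfolding E cc xs_def S_def by blast
          then show "p \<in> \<pi> ` E" using cr by blast
        qed
      next
        show "\<pi> ` E \<subseteq> \<pi> ` H_vertices m \<inter> R"
        proof
          fix p assume "p \<in> \<pi> ` E"
          then obtain r where r: "r \<in> set (take m (drop i xs))" "p = \<pi> (cs, r)"
            unfolding E xs_def S_def by blast
          then obtain j where j: "i \<le> j" "j < i + m" "r = xs ! j" using memE by blast
          have jl: "j < length xs" using j im' by auto
          have "r \<in> S" using j jl sxs nth_mem by blast
          then have H: "(cs, r) \<in> H_vertices m" using vert csC S_def by auto
          have "xs ! i \<le> r" using sorted_nth_mono[OF sorted] j jl by auto
          moreover have "r \<le> xs ! (i + m - 1)" using sorted_nth_mono[OF sorted] j im' by auto
          ultimately have "\<pi> (cs, r) \<in> R" unfolding R_def \<pi>_def b1_def b2_def by auto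
          then show "p \<in> \<pi> ` H_vertices m \<inter> R" using H r by blast
        qed
      qed
      then show ?thesis using Rin by blast
    next
      case 2
      then obtain L r where E: "E = {(drop k L, r) | k. k \<le> length L}" and leaf: "is_leaf m (L, r)"
        unfolding path_edges_def by blast
      have LH: "(L, r) \<in> H_vertices m" using leaf unfolding is_leaf_def by blast
      then have LC: "L \<in> C" and rL: "r \<in> stage_set m L" using vert by auto
      have cok: "chain_ok m L" using LC C_def by simp
      define R where "R = {(x::real, y::real). real (r * X) \<le> x \<and> x \<le> real (r * X + rx L) \<and> y \<le> real (ry L * N + r)}"
      have Rin: "R \<in> bottomless_rects" unfolding R_def bottomless_rects_def by blast
      have "\<pi> ` H_vertices m \<inter> R = \<pi> ` E"
      proof
        show "\<pi> ` H_vertices m \<inter> R \<subseteq> \<pi> ` E"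
        proof
          fix p assume "p \<in> \<pi> ` H_vertices m \<inter> R"
          then obtain c r' where cr: "(c, r') \<in> H_vertices m" "p = \<pi> (c, r')" "\<pi> (c, r') \<in> R" by auto
          have x1: "r * X + 0 \<le> r' * X + rx c" and x2: "r' * X + rx c \<le> r * X + rx L"
            and y: "ry c * N + r' \<le> ry L * N + r"
            using cr(3) unfolding R_def \<pi>_def by auto
          have cC: "c \<in> C" using cr(1) vert by auto
          have "r \<le> r'" using nat_block_le[OF rxlt[OF cC] x1] .
          moreover have "r' \<le> r" using nat_block_le[OF rxlt[OF LC] x2] .
          ultimately have rr: "r' = r" by simp
          then have "rx c \<le> rx L" "ry c \<le> ry L" using x2 y rN[OF LH] by auto
          then have "c = L \<or> ltx c L" "c = L \<or> lty c L" using rxle ryle cC LC by auto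
          then obtain k where "k \<le> length L" "c = drop k L" using both_le_suffix by blast
          then have "(c, r') \<in> E" unfolding E rr by blast
          then show "p \<in> \<pi> ` E" using cr by blast
        qed
      next
        show "\<pi> ` E \<subseteq> \<pi> ` H_vertices m \<inter> R"
        proof
          fix p assume "p \<in> \<pi> ` E"
          then obtain k where k: "k \<le> length L" "p = \<pi> (drop k L, r)" unfolding E by blast
          have dC: "drop k L \<in> C" using chain_drop[OF cok] C_def by simp
          have "r \<in> stage_set m (drop k L)" using stage_drop[OF cok] rL by blast
          then have H: "(drop k L, r) \<in> H_vertices m" using vert dC by auto
          have "rx (drop k L) \<le> rx L" "ry (drop k L) \<le> ry L"
            using suffix_lt[OF k(1)] rxle ryle dC LC by auto
          then have "\<pi> (drop k L, r) \<in> R" unfolding R_def \<pi>_def by auto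
          then show "p \<in> \<pi> ` H_vertices m \<inter> R" using H k by blast
        qed
      qed
      then show ?thesis using Rin by blast
    qed
  qed
  show ?thesis using inj edges by blast
qed

end
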